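(* Let $V$ be a real Hilbert space, $\mathcal D$ a dictionary, $V_n\subset V$ any subspace of dimension $n$ with orthonormal basis $(\phi_1,\dots,\phi_n)$, and $\kappa\in(0,1)$. If $(W_m)_{m\ge0}$ is generated by the collective OMP algorithm with parameter $\kappa$, then $\lim_{m\to\infty}r_m=0$.
   Context: A dictionary is a set $\mathcal D\subset V$ of elements with $\|\omega\|=1$ for all $\omega\in\mathcal D$ whose finite linear combinations are dense in $V$. Collective OMP: $W_0=\{0\}$; for $k\ge1$, choose $\omega_k\in\mathcal D$ with $$\sum_{i=1}^n|\langle\phi_i-P_{W_{k-1}}\phi_i,\omega_k\rangle|^2\ge\kappa^2\sup_{\omega\in\mathcal D}\sum_{i=1}^n|\langle\phi_i-P_{W_{k-1}}\phi_i,\omega\rangle|^2,$$ and set $W_k=\operatorname{span}\{\omega_1,\dots,\omega_k\}$ ($P_X$ is the orthogonal projection onto $X$). The residual is $r_m=\sum_{i=1}^n\|\phi_i-P_{W_m}\phi_i\|^2$. *)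

theory Defs
  imports "HOL-Analysis.Analysis"
begin

text \<open>Orthogonal projection onto a subspace W: the unique y in W with x - y orthogonal to W.
  (Used here only for finite-dimensional, hence closed, subspaces of a Hilbert space,
  where it exists and is unique.)\<close>
definition orth_proj :: "'a::real_inner set \<Rightarrow> 'a \<Rightarrow> 'a" where
  "orth_proj W x = (THE y. y \<in> W \<and> (\<forall>w\<in>W. inner (x - y) w = 0))"

definition dictionary :: "'a::real_normed_vector set \<Rightarrow> bool" where
  "dictionary D \<longleftrightarrow> (\<forall>w\<in>D. norm w = 1) \<and> closure (span D) = UNIV"

end

theory Submission
  imports Defs
begin

lemma proj_exists:
  fixes S :: "'a::real_inner set"
  assumes "finite S"
  shows "\<exists>y\<in>span S. \<forall>w\<in>span S. inner (x - y) w = 0"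
  using assms
proof (induction S arbitrary: x)
  case empty
  then show ?case by auto
next
  case (insert a S)
  obtain p where p: "p \<in> span S" "\<forall>w\<in>span S. inner (x - p) w = 0"
    using insert.IH by blast
  obtain q where q: "q \<in> span S" "\<forall>w\<in>span S. inner (a - q) w = 0"
    using insert.IH by blast
  define a' where "a' = a - q"
  show ?case
  proof (cases "a' = 0")
    case True
    then have "a \<in> span S" using q a'_def by simp
    then have "span (insert a S) = span S" by (simp add: span_redundant)
    then show ?thesis using p by auto
  next
    case False
    define t where "t = inner (x - p) a' / inner a' a'"
    define p' where "p' = p + t *\<^sub>R a'"
    have a'span: "a' \<in> span (insert a S)"
      unfolding a'_def by (meson q(1) span_base span_diff span_mono insertI1 subset_insertI subsetD)
    have "p' \<in> span (insert a S)"
      unfolding p'_def using p(1) a'span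
      by (meson span_add span_mul span_mono subset_insertI subsetD)
    moreover have "inner (x - p') w = 0" if w: "w \<in> span (insert a S)" for w
    proof -
      obtain k where k: "w - k *\<^sub>R a \<in> span S" using w span_insert by blast
      define w0 where "w0 = w - k *\<^sub>R a + k *\<^sub>R q"
      have w0: "w0 \<in> span S" unfolding w0_def using k q(1) by (simp add: span_add span_mul)
      have weq: "w = w0 + k *\<^sub>R a'" unfolding w0_def a'_def by (simp add: algebra_simps)
      have o1: "inner (x - p') w0 = 0"
        using p(2) q(2) w0 unfolding p'_def a'_def
        by (simp add: inner_diff_left inner_add_left)
      have "inner a' a' \<noteq> 0" using False by simp
      then have o2: "inner (x - p') a' = 0"
        unfolding p'_def t_def by (simp add: inner_diff_left inner_add_left field_simps)
      show ?thesis using o1 o2 weq by (simp add: inner_add_right)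
    qed
    ultimately show ?thesis by blast
  qed
qed

lemma orth_proj_props:
  fixes S :: "'a::real_inner set"
  assumes "finite S"
  shows "orth_proj (span S) x \<in> span S \<and> (\<forall>w\<in>span S. inner (x - orth_proj (span S) x) w = 0)"
proof -
  have ex: "\<exists>!y. y \<in> span S \<and> (\<forall>w\<in>span S. inner (x - y) w = 0)"
  proof -
    obtain y where y: "y \<in> span S" "\<forall>w\<in>span S. inner (x - y) w = 0"
      using proj_exists[OF assms] by blast
    have "z = y" if z: "z \<in> span S" "\<forall>w\<in>span S. inner (x - z) w = 0" for z
    proof -
      have d: "y - z \<in> span S" using y z by (simp add: span_diff)
      have "inner (x - z) (y - z) - inner (x - y) (y - z) = 0" using d y z by simp
      then have "inner (y - z) (y - z) = 0" by (simp add: inner_diff_left algebra_simps)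
      then show ?thesis by simp
    qed
    then show ?thesis using y by blast
  qed
  show ?thesis unfolding orth_proj_def using theI'[OF ex] by blast
qed

theorem mainTheorem10:
  fixes D :: "'a::{real_inner, complete_space} set"
    and \<phi> :: "nat \<Rightarrow> 'a"
    and n :: nat
    and \<kappa> :: real
    and \<omega> :: "nat \<Rightarrow> 'a"
    and W :: "nat \<Rightarrow> 'a set"
  assumes dict: "dictionary D"
    and onb: "\<forall>i<n. \<forall>j<n. inner (\<phi> i) (\<phi> j) = (if i = j then 1 else 0)"
    and kappa: "0 < \<kappa>" "\<kappa> < 1"
    and W_def: "\<forall>k. W k = span (\<omega> ` {1..k})"
    and omp: "\<forall>k\<ge>1. \<omega> k \<in> D \<and>
        (\<Sum>i<n. (inner (\<phi> i - orth_proj (W (k - 1)) (\<phi> i)) (\<omega> k))\<^sup>2)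
          \<ge> \<kappa>\<^sup>2 * (SUP w\<in>D. (\<Sum>i<n. (inner (\<phi> i - orth_proj (W (k - 1)) (\<phi> i)) w)\<^sup>2))"
  shows "(\<lambda>m. \<Sum>i<n. (norm (\<phi> i - orth_proj (W m) (\<phi> i)))\<^sup>2) \<longlonglongrightarrow> 0"
proof -
  define r where "r = (\<lambda>m i. \<phi> i - orth_proj (W m) (\<phi> i))"
  have Wfin: "W k = span (\<omega> ` {1..k})" "finite (\<omega> ` {1..k})" for k using W_def by auto
  have orth: "inner (r k i) w = 0" if "w \<in> W k" for k i w
    using orth_proj_props[OF Wfin(2)[of k], of "\<phi> i"] that unfolding r_def Wfin(1) by blast
  have Pin: "orth_proj (W k) (\<phi> i) \<in> W k" for k i
    using orth_proj_props[OF Wfin(2)[of k], of "\<phi> i"] unfolding Wfin(1) by blast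
  have Wmono: "W m \<subseteq> W k" if "m \<le> k" for m k
    unfolding Wfin(1) using that by (intro span_mono image_mono) auto
  have omW: "\<omega> j \<in> W k" if "1 \<le> j" "j \<le> k" for j k
    unfolding Wfin(1) using that by (intro span_base) auto
  have pyth: "(norm (r m i))\<^sup>2 = (norm (r k i))\<^sup>2 + (norm (r m i - r k i))\<^sup>2" if "m \<le> k" for m k i
  proof -
    have d: "r m i - r k i \<in> W k"
      using Pin[of k i] Pin[of m i] Wmono[OF that] unfolding r_def
      by (simp add: Wfin(1) span_diff subsetD)
    have "orthogonal (r k i) (r m i - r k i)" using orth[OF d] by (simp add: orthogonal_def)
    from norm_add_Pythagorean[OF this] show ?thesis by simp
  qed
  have dec: "decseq (\<lambda>m. (norm (r m i))\<^sup>2)" for i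
    unfolding decseq_def using pyth by (metis le_add_same_cancel1 zero_le_power2)
  have lim_ex: "\<exists>\<rho>. (\<lambda>m. r m i) \<longlonglongrightarrow> \<rho>" for i
  proof -
    define a where "a = (\<lambda>m. (norm (r m i))\<^sup>2)"
    obtain L where L: "a \<longlonglongrightarrow> L"
      using decseq_convergent[of a 0] dec[of i] unfolding a_def by auto
    have aL: "L \<le> a m" for m
      using decseq_ge[OF dec[of i]] L unfolding a_def by blast
    have "Cauchy (\<lambda>m. r m i)"
    proof (rule CauchyI)
      fix e :: real assume e: "0 < e"
      then have "e\<^sup>2 > 0" by simp
      from L[unfolded LIMSEQ_def, rule_format, OF this] obtain M where M: "\<forall>m\<ge>M. dist (a m) L < e\<^sup>2" by blast
      have bound: "norm (r m i - r k i) < e" if "M \<le> m" "m \<le> k" for m k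
      proof -
        have "(norm (r m i - r k i))\<^sup>2 = a m - a k" using pyth[OF that(2)] unfolding a_def by simp
        also have "\<dots> \<le> a m - L" using aL[of k] by simp
        also have "\<dots> < e\<^sup>2" using M that(1) aL[of m] by (auto simp: dist_real_def)
        finally show ?thesis using e by (simp add: power_less_imp_less_base)
      qed
      show "\<exists>M. \<forall>m\<ge>M. \<forall>k\<ge>M. norm (r m i - r k i) < e"
      proof (intro exI allI impI)
        fix m k assume "M \<le> m" "M \<le> k"
        then show "norm (r m i - r k i) < e"
          using bound[of m k] bound[of k m] by (cases "m \<le> k") (auto simp: norm_minus_commute)
      qed
    qed
    then show ?thesis using Cauchy_convergent convergent_def by blast
  qed
  then obtain \<rho> where rho: "\<And>i. (\<lambda>m. r m i) \<longlonglongrightarrow> \<rho> i" by metis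
  have rho_orth: "inner (\<rho> i) (\<omega> j) = 0" if "1 \<le> j" for i j
  proof -
    have "(\<lambda>k. inner (r (k + j) i) (\<omega> j)) \<longlonglongrightarrow> inner (\<rho> i) (\<omega> j)"
      using LIMSEQ_ignore_initial_segment[OF rho[of i], of j] by (intro tendsto_intros)
    moreover have "(\<lambda>k. inner (r (k + j) i) (\<omega> j)) = (\<lambda>k. 0)"
      using orth omW that by auto
    ultimately show ?thesis using LIMSEQ_unique tendsto_const by metis
  qed
  have omp': "\<omega> (Suc m) \<in> D \<and> (\<Sum>i<n. (inner (r m i) (\<omega> (Suc m)))\<^sup>2)
          \<ge> \<kappa>\<^sup>2 * (SUP w\<in>D. (\<Sum>i<n. (inner (r m i) w)\<^sup>2))" for m
    using omp[rule_format, of "Suc m"] unfolding r_def by simp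
  have normD: "norm w = 1" if "w \<in> D" for w using dict that by (simp add: dictionary_def)
  have sqle: "(inner x w)\<^sup>2 \<le> (norm x)\<^sup>2" if "w \<in> D" for x w
  proof -
    have "\<bar>inner x w\<bar> \<le> norm x" using Cauchy_Schwarz_ineq2[of x w] normD[OF that] by simp
    then show ?thesis by (metis abs_ge_zero power2_abs power_mono)
  qed
  define g where "g = (\<lambda>m. \<Sum>i<n. (inner (r m i) (\<omega> (Suc m)))\<^sup>2)"
  have g0: "g \<longlonglongrightarrow> 0"
  proof (rule tendsto_sandwich[of "\<lambda>m. 0" _ _ "\<lambda>m. \<Sum>i<n. (norm (r m i - \<rho> i))\<^sup>2"])
    show "\<forall>\<^sub>F m in sequentially. 0 \<le> g m" unfolding g_def by (intro always_eventually allI sum_nonneg) simp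
    show "\<forall>\<^sub>F m in sequentially. g m \<le> (\<Sum>i<n. (norm (r m i - \<rho> i))\<^sup>2)"
    proof (rule always_eventually, rule allI)
      fix m
      have "inner (r m i) (\<omega> (Suc m)) = inner (r m i - \<rho> i) (\<omega> (Suc m))" for i
        using rho_orth[of "Suc m" i] by (simp add: inner_diff_left)
      then show "g m \<le> (\<Sum>i<n. (norm (r m i - \<rho> i))\<^sup>2)"
        unfolding g_def using sqle omp'[of m] by (auto intro!: sum_mono)
    qed
    show "(\<lambda>m. 0) \<longlonglongrightarrow> (0::real)" by simp
    have "(\<lambda>m. r m i - \<rho> i) \<longlonglongrightarrow> 0" for i using tendsto_diff[OF rho[of i] tendsto_const[of "\<rho> i"]] by simp
    then have "(\<lambda>m. (norm (r m i - \<rho> i))\<^sup>2) \<longlonglongrightarrow> 0" for i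
      using tendsto_norm_zero tendsto_power by fastforce
    then show "(\<lambda>m. \<Sum>i<n. (norm (r m i - \<rho> i))\<^sup>2) \<longlonglongrightarrow> 0"
      using tendsto_sum[of "{..<n}" "\<lambda>i m. (norm (r m i - \<rho> i))\<^sup>2" "\<lambda>i. 0"] by simp
  qed
  have rhoD: "inner (\<rho> i) w = 0" if w: "w \<in> D" "i < n" for i w
  proof -
    have h_le: "(\<Sum>i<n. (inner (r m i) w)\<^sup>2) \<le> g m / \<kappa>\<^sup>2" for m
    proof -
      have bdd: "bdd_above ((\<lambda>w. \<Sum>i<n. (inner (r m i) w)\<^sup>2) ` D)"
        by (rule bdd_aboveI2[of _ _ "\<Sum>i<n. (norm (r m i))\<^sup>2"]) (auto intro!: sum_mono sqle)
      have "(\<Sum>i<n. (inner (r m i) w)\<^sup>2) \<le> (SUP w\<in>D. (\<Sum>i<n. (inner (r m i) w)\<^sup>2))"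
        by (rule cSUP_upper[OF w(1) bdd])
      also have "\<dots> \<le> g m / \<kappa>\<^sup>2"
        using omp'[of m] kappa unfolding g_def by (simp add: field_simps mult.commute)
      finally show ?thesis .
    qed
    have "(\<lambda>m. \<Sum>i<n. (inner (r m i) w)\<^sup>2) \<longlonglongrightarrow> (\<Sum>i<n. (inner (\<rho> i) w)\<^sup>2)"
      by (intro tendsto_intros rho)
    moreover have "(\<lambda>m. g m / \<kappa>\<^sup>2) \<longlonglongrightarrow> 0 / \<kappa>\<^sup>2" using kappa by (intro tendsto_intros g0) simp
    ultimately have "(\<Sum>i<n. (inner (\<rho> i) w)\<^sup>2) \<le> 0"
      using LIMSEQ_le h_le by fastforce
    then have "(\<Sum>i<n. (inner (\<rho> i) w)\<^sup>2) = 0" by (simp add: order_antisym sum_nonneg)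
    then have "\<forall>i\<in>{..<n}. (inner (\<rho> i) w)\<^sup>2 = 0" by (subst (asm) sum_nonneg_eq_0_iff) auto
    then show ?thesis using w(2) by simp
  qed
  have rho0: "\<rho> i = 0" if "i < n" for i
  proof -
    have sp: "inner (\<rho> i) y = 0" if "y \<in> span D" for y
      using orthogonal_to_span[OF that, of "\<rho> i"] rhoD \<open>i < n\<close> by (simp add: orthogonal_def)
    have cl: "closed {y. inner (\<rho> i) y = 0}"
      by (intro closed_Collect_eq continuous_intros)
    have "closure (span D) \<subseteq> {y. inner (\<rho> i) y = 0}"
      by (rule closure_minimal) (use sp cl in auto)
    then have "inner (\<rho> i) (\<rho> i) = 0" using dict unfolding dictionary_def by blast
    then show ?thesis by simp
  qed
  have "(\<lambda>m. (norm (r m i))\<^sup>2) \<longlonglongrightarrow> 0" if "i < n" for i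
    using rho[of i] rho0[OF that] tendsto_norm_zero tendsto_power by fastforce
  then have "(\<lambda>m. \<Sum>i<n. (norm (r m i))\<^sup>2) \<longlonglongrightarrow> (\<Sum>i<n. 0)"
    by (intro tendsto_sum) auto
  then show ?thesis unfolding r_def by simp
qed

end
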